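(* Let $\mathcal{C}_{\mathrm{tr}}$ be the class of all transitive permutation groups. Then \[ \lim_{n} \frac{\mathbf{F}_{\mathcal{C}_{\mathrm{tr}}}(n)}{n} = \frac{1}{2}. \]
   Context: For a transitive permutation group $G$ on a finite set $\Omega$ with $|\Omega|\ge 2$, a subset $A\subseteq\Omega$ is self-separable for $G$ if there exists $g\in G$ with $A\cap A^g=\emptyset$; $\mathbf{m}(G)$ is the minimum cardinality of a subset of $\Omega$ that is not self-separable for $G$. For a family $\mathcal{C}$ of transitive permutation groups, $\mathcal{C}_n$ is the set of members of degree $n$, $X_{\mathcal{C}}=\{n:\mathcal{C}_n\ne\emptyset\}$, and $\mathbf{F}_{\mathcal{C}}:X_{\mathcal{C}}\to\mathbb{N}$, $n\mapsto\max\{\mathbf{m}(G):G\in\mathcal{C}_n\}$. *)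

theory Defs
  imports "HOL-Combinatorics.Permutations" Complex_Main
begin

text \<open>Permutation groups of degree n are taken on the set {0..<n}; every permutation
group of degree n is permutation-isomorphic to one on {0..<n}, and m(G) is invariant
under permutation isomorphism.\<close>

definition perm_group_on :: "nat \<Rightarrow> (nat \<Rightarrow> nat) set \<Rightarrow> bool" where
  "perm_group_on n G \<longleftrightarrow>
     (\<forall>g\<in>G. g permutes {0..<n}) \<and> id \<in> G \<and>
     (\<forall>g\<in>G. \<forall>h\<in>G. g \<circ> h \<in> G) \<and> (\<forall>g\<in>G. inv g \<in> G)"

definition transitive_perm_group :: "nat \<Rightarrow> (nat \<Rightarrow> nat) set \<Rightarrow> bool" where
  "transitive_perm_group n G \<longleftrightarrow>
     perm_group_on n G \<and> (\<forall>x<n. \<forall>y<n. \<exists>g\<in>G. g x = y)"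

definition self_separable :: "(nat \<Rightarrow> nat) set \<Rightarrow> nat set \<Rightarrow> bool" where
  "self_separable G A \<longleftrightarrow> (\<exists>g\<in>G. A \<inter> g ` A = {})"

definition m_inv :: "nat \<Rightarrow> (nat \<Rightarrow> nat) set \<Rightarrow> nat" where
  "m_inv n G = (LEAST k. \<exists>A. A \<subseteq> {0..<n} \<and> card A = k \<and> \<not> self_separable G A)"

text \<open>F for the class of all transitive permutation groups; its domain X is {n. n >= 2}.\<close>
definition F_tr :: "nat \<Rightarrow> nat" where
  "F_tr n = Max {m_inv n G | G. transitive_perm_group n G}"

end

theory Submission
  imports Defs
begin

lemma big_not_sep:
  assumes "g permutes {0..<n}" "A \<subseteq> {0..<n}" "n < 2 * card A"
  shows "A \<inter> g ` A \<noteq> {}"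
proof
  assume d: "A \<inter> g ` A = {}"
  have fA: "finite A" using assms(2) finite_subset by blast
  have "inj g" using assms(1) permutes_inj by blast
  hence cg: "card (g ` A) = card A" by (meson card_image inj_on_subset subset_UNIV)
  have "g ` A \<subseteq> {0..<n}" using assms(1,2) permutes_image[OF assms(1)] by blast
  hence "card (A \<union> g ` A) \<le> n" using assms(2)
    by (metis card_atLeastLessThan card_mono diff_zero finite_atLeastLessThan le_sup_iff)
  moreover have "card (A \<union> g ` A) = card A + card (g ` A)"
    using d fA by (simp add: card_Un_disjoint)
  ultimately show False using cg assms(3) by linarith
qed

lemma small_sep:
  assumes "A \<subseteq> {0..<n}" "2 * card A \<le> n"
  shows "\<exists>g. g permutes {0..<n} \<and> A \<inter> g ` A = {}"
proof -
  have fA: "finite A" using assms(1) finite_subset by blast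
  have "card ({0..<n} - A) = n - card A" using assms(1) fA
    by (simp add: card_Diff_subset)
  hence "card A \<le> card ({0..<n} - A)" using assms(2) by simp
  then obtain C where C: "C \<subseteq> {0..<n} - A" "card C = card A" "finite C"
    by (meson obtain_subset_with_card_n)
  obtain f where f: "bij_betw f A C" using finite_same_card_bij[OF fA C(3)] C(2) by metis
  have fi: "bij_betw (inv_into A f) C A" using f by (simp add: bij_betw_inv_into)
  have disj: "A \<inter> C = {}" using C(1) by blast
  define h where "h = (\<lambda>x. if x \<in> A then f x else inv_into A f x)"
  have "bij_betw h (A \<union> C) (C \<union> A)"
    unfolding h_def by (rule bij_betw_disjoint_Un[OF f fi disj]) (use disj in blast)
  hence b: "bij_betw h (A \<union> C) (A \<union> C)" by (simp add: Un_commute)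
  have p: "restrict_id h (A \<union> C) permutes (A \<union> C)" by (rule permutes_restrict_id[OF b])
  have p2: "restrict_id h (A \<union> C) permutes {0..<n}"
    by (rule permutes_subset[OF p]) (use C(1) assms(1) in blast)
  have "restrict_id h (A \<union> C) ` A = f ` A"
    by (auto simp: h_def)
  also have "\<dots> = C" using f by (simp add: bij_betw_def)
  finally show ?thesis using p2 disj by metis
qed

lemma m_inv_le:
  assumes "perm_group_on n G" "n \<ge> 1"
  shows "m_inv n G \<le> n div 2 + 1"
proof -
  define A where "A = {0..<n div 2 + 1}"
  have sub: "A \<subseteq> {0..<n}" unfolding A_def using assms(2) by auto
  have cA: "card A = n div 2 + 1" unfolding A_def by simp
  have lt: "n < 2 * card A" unfolding cA by simp
  have ns: "\<not> self_separable G A"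
    unfolding self_separable_def
  proof
    assume "\<exists>g\<in>G. A \<inter> g ` A = {}"
    then obtain g where g: "g \<in> G" "A \<inter> g ` A = {}" by blast
    have "g permutes {0..<n}" using g(1) assms(1) unfolding perm_group_on_def by blast
    from big_not_sep[OF this sub lt] g(2) show False by blast
  qed
  have "\<exists>A. A \<subseteq> {0..<n} \<and> card A = n div 2 + 1 \<and> \<not> self_separable G A"
    using sub cA ns by blast
  thus ?thesis unfolding m_inv_def by (rule Least_le)
qed

definition Sym :: "nat \<Rightarrow> (nat \<Rightarrow> nat) set" where
  "Sym n = {p. p permutes {0..<n}}"

lemma Sym_trans: "transitive_perm_group n (Sym n)"
  unfolding transitive_perm_group_def perm_group_on_def Sym_def
proof (intro conjI ballI allI impI)
  fix x y assume "x < n" "y < n"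
  hence "Transposition.transpose x y permutes {0..<n}" by (intro permutes_swap_id) auto
  thus "\<exists>g\<in>{p. p permutes {0..<n}}. g x = y" by force
next
  fix g h assume "g \<in> {p. p permutes {0..<n}}" "h \<in> {p. p permutes {0..<n}}"
  thus "g \<circ> h \<in> {p. p permutes {0..<n}}" by (simp add: permutes_compose)
next
  fix g assume "g \<in> {p. p permutes {0..<n}}"
  thus "inv g \<in> {p. p permutes {0..<n}}" by (simp add: permutes_inv)
qed (simp_all add: permutes_id)

lemma m_inv_Sym:
  assumes "n \<ge> 1"
  shows "m_inv n (Sym n) = n div 2 + 1"
proof -
  have pg: "perm_group_on n (Sym n)" using Sym_trans unfolding transitive_perm_group_def by blast
  have le: "m_inv n (Sym n) \<le> n div 2 + 1" by (rule m_inv_le[OF pg assms])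
  define B where "B = {0..<n div 2 + 1}"
  have sub: "B \<subseteq> {0..<n}" unfolding B_def using assms by auto
  have cB: "card B = n div 2 + 1" unfolding B_def by simp
  have lt: "n < 2 * card B" unfolding cB by simp
  have ns: "\<not> self_separable (Sym n) B"
    unfolding self_separable_def
  proof
    assume "\<exists>g\<in>Sym n. B \<inter> g ` B = {}"
    then obtain g where g: "g \<in> Sym n" "B \<inter> g ` B = {}" by blast
    have "g permutes {0..<n}" using g(1) unfolding Sym_def by blast
    from big_not_sep[OF this sub lt] g(2) show False by blast
  qed
  have ex: "\<exists>k A. A \<subseteq> {0..<n} \<and> card A = k \<and> \<not> self_separable (Sym n) A"
    using sub ns by blast
  have "\<exists>A. A \<subseteq> {0..<n} \<and> card A = m_inv n (Sym n) \<and> \<not> self_separable (Sym n) A"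
    unfolding m_inv_def by (rule LeastI_ex[OF ex])
  then obtain A where A: "A \<subseteq> {0..<n}" "card A = m_inv n (Sym n)" "\<not> self_separable (Sym n) A"
    by blast
  have "n < 2 * card A"
  proof (rule ccontr)
    assume "\<not> n < 2 * card A"
    hence "2 * card A \<le> n" by simp
    from small_sep[OF A(1) this] obtain g where g: "g permutes {0..<n}" "A \<inter> g ` A = {}"
      by blast
    have "g \<in> Sym n" using g(1) unfolding Sym_def by blast
    hence "self_separable (Sym n) A" unfolding self_separable_def using g(2) by blast
    thus False using A(3) by blast
  qed
  thus ?thesis using le A(2) by linarith
qed

lemma F_tr_eq:
  assumes "n \<ge> 1"
  shows "F_tr n = n div 2 + 1"
proof -
  define S where "S = {m_inv n G |G. transitive_perm_group n G}"
  have bnd: "\<And>y. y \<in> S \<Longrightarrow> y \<le> n div 2 + 1"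
  proof -
    fix y assume "y \<in> S"
    then obtain G where "y = m_inv n G" "transitive_perm_group n G" unfolding S_def by blast
    thus "y \<le> n div 2 + 1" using m_inv_le[OF _ assms] unfolding transitive_perm_group_def by blast
  qed
  have fin: "finite S"
  proof (rule finite_subset[of _ "{..n div 2 + 1}"])
    show "S \<subseteq> {..n div 2 + 1}" using bnd by blast
  qed simp
  have "m_inv n (Sym n) \<in> S"
    unfolding S_def using Sym_trans by blast
  hence mem: "n div 2 + 1 \<in> S" unfolding m_inv_Sym[OF assms] .
  have "Max S = n div 2 + 1" by (rule Max_eqI[OF fin bnd mem])
  thus ?thesis unfolding F_tr_def S_def .
qed

theorem theoremB:
  shows "(\<lambda>n. real (F_tr n) / real n) \<longlonglongrightarrow> 1 / 2"
proof (rule real_tendsto_sandwich[of "\<lambda>n. 1/2" _ _ "\<lambda>n. 1/2 + 1 / real n"])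
  show "\<forall>\<^sub>F n in sequentially. 1 / 2 \<le> real (F_tr n) / real n"
    using eventually_ge_at_top[of "1::nat"]
  proof eventually_elim
    case (elim n)
    have np: "0 < real n" using elim by simp
    have "n \<le> 2 * F_tr n" using F_tr_eq[OF elim] by simp
    hence "real n \<le> real (2 * F_tr n)" by (simp only: of_nat_le_iff)
    hence "real n \<le> 2 * real (F_tr n)" by simp
    hence "1 / 2 * real n \<le> real (F_tr n)" by linarith
    thus ?case using pos_le_divide_eq[OF np] by blast
  qed
  show "\<forall>\<^sub>F n in sequentially. real (F_tr n) / real n \<le> 1/2 + 1 / real n"
    using eventually_ge_at_top[of "1::nat"]
  proof eventually_elim
    case (elim n)
    have np: "0 < real n" using elim by simp
    have "2 * F_tr n \<le> n + 2" using F_tr_eq[OF elim] by simp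
    hence "real (2 * F_tr n) \<le> real (n + 2)" by (simp only: of_nat_le_iff)
    hence "2 * real (F_tr n) \<le> real n + 2" by simp
    moreover have "(1/2 + 1 / real n) * real n = real n / 2 + 1"
      using np by (simp add: distrib_right)
    ultimately have "real (F_tr n) \<le> (1/2 + 1 / real n) * real n" by linarith
    thus ?case using pos_divide_le_eq[OF np] by blast
  qed
  show "(\<lambda>n. 1 / 2) \<longlonglongrightarrow> (1 / 2 :: real)" by simp
  show "(\<lambda>n. 1 / 2 + 1 / real n) \<longlonglongrightarrow> (1 / 2 :: real)"
    using tendsto_add[OF tendsto_const[of "1/2::real"] lim_1_over_n] by simp
qed

end
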